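(* Let $m\ge3$, $n=2^m-1$, and let $\mathcal{C}$ be the $[2^m-1,2^m-1-m]$ binary Hamming code whose parity-check matrix has, as its $i$-th column, the binary representation of $i$ (as an $m$-bit vector), for $1\le i\le 2^m-1$. Then \[ N(\mathcal{C};S_2)=2^{\lfloor (2^m-1)/2\rfloor-1}. \]
   Context: $S_2\subseteq\{0,1\}^n$ (the 2-charge constraint) is the set of $\mathbf{x}\in\{0,1\}^n$ such that, with $y_i=(-1)^{x_i}$, $0\le\sum_{i=1}^r y_i\le 2$ for all $1\le r\le n$. $N(\mathcal{C};S_2)=|\mathcal{C}\cap S_2|$ is the number of codewords of $\mathcal{C}$ in $S_2$. *)

theory Defs
  imports Main
begin

(* Binary words of length n are lists over {0,1}; position i (1-based) is x ! (i-1). *)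
definition binary_words :: "nat \<Rightarrow> nat list set" where
  "binary_words n = {x. length x = n \<and> set x \<subseteq> {0,1}}"

definition bit_of :: "nat \<Rightarrow> nat \<Rightarrow> nat" where
  "bit_of i j = i div 2 ^ j mod 2"

(* Binary Hamming code of length 2^m - 1 with parity-check matrix H whose i-th
   column is the m-bit binary representation of i (1 <= i <= 2^m - 1):
   x is a codeword iff H x^T = 0 over GF(2), i.e. every row sum is even. *)
definition hamming_code :: "nat \<Rightarrow> nat list set" where
  "hamming_code m = {x \<in> binary_words (2 ^ m - 1).
      \<forall>j<m. even (\<Sum>i=1..2 ^ m - 1. bit_of i j * x ! (i - 1))}"

definition S2 :: "nat \<Rightarrow> nat list set" where
  "S2 n = {x \<in> binary_words n.
      \<forall>r\<in>{1..n}. 0 \<le> (\<Sum>i=1..r. (-1::int) ^ (x ! (i - 1))) \<and>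
                   (\<Sum>i=1..r. (-1::int) ^ (x ! (i - 1))) \<le> 2}"

definition N_count :: "nat list set \<Rightarrow> nat list set \<Rightarrow> nat" where
  "N_count C S = card (C \<inter> S)"

end

theory Submission imports Defs begin

lemma bw_fin: "finite (binary_words K)" and bw_card: "card (binary_words K) = 2^K"
proof -
  have e: "binary_words K = {xs. set xs \<subseteq> {0,1::nat} \<and> length xs = K}"
    unfolding binary_words_def by auto
  show "finite (binary_words K)" unfolding e by (rule finite_lists_length_eq) simp
  show "card (binary_words K) = 2^K" unfolding e by (simp add: card_lists_length_eq numeral_2_eq_2)
qed

definition z :: "nat list \<Rightarrow> nat" where "z b = sum_list (map (\<lambda>c. 1 - c) b)"

lemma split_bw: "{b \<in> binary_words (Suc K). even (z b)} =
   Cons 0 ` {b \<in> binary_words K. odd (z b)} \<union> Cons 1 ` {b \<in> binary_words K. even (z b)}"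
proof safe
  fix b assume b: "b \<in> binary_words (Suc K)" "even (z b)"
    "b \<notin> Cons 1 ` {b \<in> binary_words K. even (z b)}"
  then obtain c t where bt: "b = c # t" unfolding binary_words_def by (cases b) auto
  have c: "c = 0 \<or> c = 1" and t: "t \<in> binary_words K" using b(1) bt unfolding binary_words_def by auto
  show "b \<in> Cons 0 ` {b \<in> binary_words K. odd (z b)}"
  proof (cases "c = 0")
    case True then show ?thesis using b(2) bt t by (auto simp: z_def)
  next
    case False then have "c = 1" using c by simp
    then show ?thesis using b bt t by (auto simp: z_def)
  qed
qed (auto simp: binary_words_def z_def)

lemma count_even: "card {b \<in> binary_words (Suc K). even (z b)} = 2^K"
proof -
  have f1: "finite {b \<in> binary_words K. odd (z b)}" "finite {b \<in> binary_words K. even (z b)}"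
    using bw_fin by auto
  have "card {b \<in> binary_words (Suc K). even (z b)} =
     card {b \<in> binary_words K. odd (z b)} + card {b \<in> binary_words K. even (z b)}"
    unfolding split_bw
    by (subst card_Un_disjoint) (auto simp: f1 card_image)
  also have "\<dots> = card ({b \<in> binary_words K. odd (z b)} \<union> {b \<in> binary_words K. even (z b)})"
    by (subst card_Un_disjoint) (auto simp: f1)
  also have "{b \<in> binary_words K. odd (z b)} \<union> {b \<in> binary_words K. even (z b)} = binary_words K"
    by auto
  finally show ?thesis by (simp add: bw_card)
qed

lemma S2_step:
  assumes x: "x \<in> binary_words n"
  shows "r \<le> n \<Longrightarrow>
    ((\<forall>r'\<in>{1..r}. 0 \<le> (\<Sum>i=1..r'. (-1::int) ^ (x ! (i - 1))) \<and> (\<Sum>i=1..r'. (-1::int) ^ (x ! (i - 1))) \<le> 2)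
     \<longleftrightarrow> (\<forall>i<r. even i \<longrightarrow> x ! i = (if i = 0 then 0 else 1 - x ! (i - 1))))
    \<and> ((\<forall>i<r. even i \<longrightarrow> x ! i = (if i = 0 then 0 else 1 - x ! (i - 1))) \<longrightarrow>
       (\<Sum>i=1..r. (-1::int) ^ (x ! (i - 1))) = (if odd r then 1 else if r = 0 then 0 else 2 - 2 * int (x ! (r - 1))))"
proof (induction r)
  case 0 then show ?case by simp
next
  case (Suc r)
  have bin: "\<And>i. i < n \<Longrightarrow> x ! i = 0 \<or> x ! i = 1" using x unfolding binary_words_def
    by (auto simp: set_conv_nth)
  have xr: "x ! r = 0 \<or> x ! r = 1" using bin Suc.prems by simp
  have xr1: "x ! (r - 1) = 0 \<or> x ! (r - 1) = 1" using bin Suc.prems by simp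
  let ?s = "\<lambda>r. (\<Sum>i=1..r. (-1::int) ^ (x ! (i - 1)))"
  let ?C = "\<lambda>r. \<forall>i<r. even i \<longrightarrow> x ! i = (if i = 0 then 0 else 1 - x ! (i - 1))"
  have IH: "(\<forall>r'\<in>{1..r}. 0 \<le> ?s r' \<and> ?s r' \<le> 2) = ?C r"
     "?C r \<longrightarrow> ?s r = (if odd r then 1 else if r = 0 then 0 else 2 - 2 * int (x ! (r - 1)))"
    using Suc by auto
  have sS: "?s (Suc r) = ?s r + (-1) ^ (x ! r)" by simp
  have A: "(\<forall>r'\<in>{1..Suc r}. 0 \<le> ?s r' \<and> ?s r' \<le> 2) = ((\<forall>r'\<in>{1..r}. 0 \<le> ?s r' \<and> ?s r' \<le> 2) \<and> 0 \<le> ?s (Suc r) \<and> ?s (Suc r) \<le> 2)"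
    by (auto simp: atLeastAtMostSuc_conv simp del: sum.cl_ivl_Suc)
  have B: "?C (Suc r) = (?C r \<and> (even r \<longrightarrow> x ! r = (if r = 0 then 0 else 1 - x ! (r - 1))))"
    by (auto simp: less_Suc_eq)
  show ?case
  proof (cases "?C r")
    case False
    have n1: "\<not> ?C (Suc r)" using B False by blast
    have n2: "\<not> (\<forall>r'\<in>{1..Suc r}. 0 \<le> ?s r' \<and> ?s r' \<le> 2)" using A IH(1) False by blast
    show ?thesis using n1 n2 by blast
  next
    case True
    then have sr: "?s r = (if odd r then 1 else if r = 0 then 0 else 2 - 2 * int (x ! (r - 1)))" using IH(2) by simp
    show ?thesis unfolding A B IH(1) sS using True sr xr xr1
      by (cases "odd r"; cases "r = 0") (auto)
  qed
qed

lemma S2_char: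
  assumes x: "x \<in> binary_words n"
  shows "x \<in> S2 n \<longleftrightarrow> (\<forall>i<n. even i \<longrightarrow> x ! i = (if i = 0 then 0 else 1 - x ! (i - 1)))"
  using S2_step[OF x, of n] x unfolding S2_def by auto


definition fw :: "nat list \<Rightarrow> nat list" where
  "fw b = map (\<lambda>i. if i = 0 then 0 else if odd i then b ! (i div 2) else 1 - b ! (i div 2 - 1)) [0..<2 * length b + 1]"

lemma fw_length[simp]: "length (fw b) = 2 * length b + 1" by (simp add: fw_def)

lemma fw_nth: "i < 2 * length b + 1 \<Longrightarrow> fw b ! i = (if i = 0 then 0 else if odd i then b ! (i div 2) else 1 - b ! (i div 2 - 1))"
  by (simp add: fw_def del: upt_Suc)

lemma fw_inj: "inj fw"
proof (rule injI)
  fix a b assume e: "fw a = fw b"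
  then have l: "length a = length b" using fw_length[of a] fw_length[of b] by simp
  show "a = b"
  proof (rule nth_equalityI)
    show "length a = length b" by fact
    fix k assume "k < length a"
    then show "a ! k = b ! k" using arg_cong[OF e, of "\<lambda>x. x ! (2*k+1)"] l
      by (simp add: fw_nth)
  qed
qed

lemma char_iff:
  "(x \<in> binary_words (2*K+1) \<and> (\<forall>i<2*K+1. even i \<longrightarrow> x ! i = (if i = 0 then 0 else 1 - x ! (i - 1))))
   \<longleftrightarrow> (\<exists>b\<in>binary_words K. x = fw b)"
proof
  assume h: "x \<in> binary_words (2*K+1) \<and> (\<forall>i<2*K+1. even i \<longrightarrow> x ! i = (if i = 0 then 0 else 1 - x ! (i - 1)))"
  define b where "b = map (\<lambda>k. x ! (2*k+1)) [0..<K]"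
  have lx: "length x = 2*K+1" and sx: "set x \<subseteq> {0,1}" using h by (auto simp: binary_words_def)
  have bb: "b \<in> binary_words K"
  proof -
    have "\<And>k. k < K \<Longrightarrow> x ! (2*k+1) \<in> {0,1}" using sx lx by (intro subsetD[OF sx]) simp
    then show ?thesis unfolding b_def binary_words_def by (auto simp: set_conv_nth) (metis gr_implies_not0)
  qed
  have "x = fw b"
  proof (rule nth_equalityI)
    show "length x = length (fw b)" using lx by (simp add: b_def)
    fix i assume i: "i < length x"
    show "x ! i = fw b ! i"
    proof (cases "i = 0")
      case True then show ?thesis using h i lx by (simp add: fw_nth b_def)
    next
      case False
      show ?thesis
      proof (cases "odd i")
        case True
        then have e: "2 * (i div 2) + 1 = i" by presburger
        have k: "i div 2 < K" using i lx True by presburger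
        have "b ! (i div 2) = x ! (2 * (i div 2) + 1)" using k by (simp add: b_def)
        then have "b ! (i div 2) = x ! i" using e by simp
        moreover have "length b = K" by (simp add: b_def)
        ultimately show ?thesis using False True i lx by (simp add: fw_nth)
      next
        case ev: False
        then have e2: "2 * (i div 2 - 1) + 1 = i - 1" "i div 2 - 1 < K" using False i lx by presburger+
        have "x ! i = 1 - x ! (i - 1)" using h i lx False ev by auto
        then show ?thesis using False ev i lx e2 by (simp add: fw_nth b_def)
      qed
    qed
  qed
  then show "\<exists>b\<in>binary_words K. x = fw b" using bb by blast
next
  assume "\<exists>b\<in>binary_words K. x = fw b"
  then obtain b where b: "b \<in> binary_words K" "x = fw b" by blast
  have lb: "length b = K" and bin: "\<And>k. k < K \<Longrightarrow> b ! k \<le> 1" using b(1)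
    by (auto simp: binary_words_def set_conv_nth)
  have "set x \<subseteq> {0,1}"
  proof
    fix c assume "c \<in> set x"
    then obtain i where i: "i < 2*K+1" "c = x ! i" using b lb by (auto simp: set_conv_nth)
    have "odd i \<Longrightarrow> i div 2 < K" "i \<noteq> 0 \<Longrightarrow> i div 2 - 1 < K" using i by presburger+
    then show "c \<in> {0,1}" using i b lb bin[of "i div 2"] bin[of "i div 2 - 1"]
      by (auto simp: fw_nth)
  qed
  moreover have "\<forall>i<2*K+1. even i \<longrightarrow> x ! i = (if i = 0 then 0 else 1 - x ! (i - 1))"
  proof (intro allI impI)
    fix i assume i: "i < 2*K+1" "even i"
    show "x ! i = (if i = 0 then 0 else 1 - x ! (i - 1))"
    proof (cases "i = 0")
      case False
      then have "odd (i - 1)" "(i - 1) div 2 = i div 2 - 1" "i \<ge> 2" using i by presburger+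
      then show ?thesis using False i b lb by (simp add: fw_nth)
    qed (use i b lb in \<open>simp add: fw_nth\<close>)
  qed
  ultimately show "x \<in> binary_words (2*K+1) \<and> (\<forall>i<2*K+1. even i \<longrightarrow> x ! i = (if i = 0 then 0 else 1 - x ! (i - 1)))"
    using b lb by (simp add: binary_words_def)
qed


lemma sum_odd_split: fixes K :: nat shows "(\<Sum>t<2*K+1. h t) = (h 0 :: nat) + (\<Sum>k<K. h (2*k+1) + h (2*k+2))"
  by (induction K rule: nat.induct) (simp_all add: algebra_simps)

lemma sum_even_split: fixes N :: nat shows "(\<Sum>k<2*N. g k) = (\<Sum>k<N. (g (2*k) + g (2*k+1)) :: nat)"
  by (induction N rule: nat.induct) (simp_all add: algebra_simps)

lemma bit0a: "bit_of (2*a) 0 = 0" and bit0b: "bit_of (2*a+1) 0 = 1"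
  by (simp_all add: bit_of_def)

lemma bitSa: "bit_of (2*a) (Suc q) = bit_of a q" and bitSb: "bit_of (2*a+1) (Suc q) = bit_of a q"
proof -
  have "(2*a) div 2^Suc q = a div 2^q" by (simp add: div_mult2_eq)
  moreover have "(2*a+1) div 2^Suc q = a div 2^q"
  proof -
    have "(2*a+1) div 2^Suc q = (2*a+1) div 2 div 2^q" by (simp only: power_Suc div_mult2_eq)
    also have "(2*a+1) div 2 = a" by simp
    finally show ?thesis .
  qed
  ultimately show "bit_of (2*a) (Suc q) = bit_of a q" "bit_of (2*a+1) (Suc q) = bit_of a q"
    by (simp_all add: bit_of_def)
qed

lemma bitcount: "q < p \<Longrightarrow> (\<Sum>k<2^p. bit_of k q) = 2^(p-1)"
proof (induction q arbitrary: p)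
  case 0
  then obtain p' where p: "p = Suc p'" by (cases p) auto
  have "(\<Sum>k<2^p. bit_of k 0) = (\<Sum>k<2^p'. bit_of (2*k) 0 + bit_of (2*k+1) 0)"
    unfolding p power_Suc by (rule sum_even_split)
  also have "\<dots> = 2^p'" by (simp add: bit_of_def)
  finally show ?case using p by simp
next
  case (Suc q)
  then obtain p' where p: "p = Suc p'" "q < p'" by (cases p) auto
  have "(\<Sum>k<2^p. bit_of k (Suc q)) = (\<Sum>k<2^p'. bit_of (2*k) (Suc q) + bit_of (2*k+1) (Suc q))"
    unfolding p power_Suc by (rule sum_even_split)
  also have "\<dots> = 2 * (\<Sum>k<2^p'. bit_of k q)" by (simp only: bitSa bitSb) (simp add: sum_distrib_left mult_2 sum.distrib)
  also have "\<dots> = 2 * 2^(p'-1)" using Suc.IH p by simp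
  also have "\<dots> = 2^(p-1)" using p by (cases p') auto
  finally show ?case .
qed

lemma ham_sum:
  assumes b: "b \<in> binary_words K"
  shows "(\<Sum>i=1..2*K+1. bit_of i j * fw b ! (i - 1)) =
         (\<Sum>k<K. bit_of (2*k+2) j * b ! k + bit_of (2*k+3) j * (1 - b ! k))"
proof -
  have lb: "length b = K" using b by (simp add: binary_words_def)
  have "(\<Sum>i=1..2*K+1. bit_of i j * fw b ! (i - 1)) = (\<Sum>t<2*K+1. bit_of (Suc t) j * fw b ! t)"
    by (simp add: sum.atLeast1_atMost_eq del: sum.cl_ivl_Suc)
  also have "\<dots> = bit_of 1 j * fw b ! 0 + (\<Sum>k<K. bit_of (2*k+2) j * fw b ! (2*k+1) + bit_of (2*k+3) j * fw b ! (2*k+2))"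
    by (subst sum_odd_split) (simp add: numeral_3_eq_3)
  also have "\<dots> = (\<Sum>k<K. bit_of (2*k+2) j * b ! k + bit_of (2*k+3) j * (1 - b ! k))"
  proof -
    have "\<And>k. k < K \<Longrightarrow> fw b ! (2*k+1) = b ! k" "\<And>k. k < K \<Longrightarrow> fw b ! (2*k+2) = 1 - b ! k"
      using lb by (simp_all add: fw_nth)
    moreover have "fw b ! 0 = 0" using lb by (simp add: fw_nth)
    ultimately show ?thesis by simp
  qed
  finally show ?thesis .
qed

lemma ham_C:
  assumes m: "m \<ge> 3" and K: "K = 2^(m-1) - 1" and b: "b \<in> binary_words K"
  shows "fw b \<in> hamming_code m \<longleftrightarrow> even (z b)"
proof -
  have lb: "length b = K" and bin: "\<And>k. k < K \<Longrightarrow> b ! k \<le> 1" using b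
    by (auto simp: binary_words_def set_conv_nth)
  have n: "2^m - 1 = 2*K+1"
  proof -
    have "(2::nat)^m = 2 * 2^(m-1)" using m by (cases m) auto
    moreover have "2^(m-1) \<ge> (1::nat)" by simp
    ultimately show ?thesis using K by linarith
  qed
  have fbw: "fw b \<in> binary_words (2^m - 1)" unfolding n using char_iff[of "fw b" K] b by blast
  have S: "\<And>j. (\<Sum>i=1..2 ^ m - 1. bit_of i j * fw b ! (i - 1)) =
         (\<Sum>k<K. bit_of (2*k+2) j * b ! k + bit_of (2*k+3) j * (1 - b ! k))"
    unfolding n by (rule ham_sum[OF b])
  have j0: "(\<Sum>k<K. bit_of (2*k+2) 0 * b ! k + bit_of (2*k+3) 0 * (1 - b ! k)) = z b"
  proof -
    have "(\<Sum>k<K. bit_of (2*k+2) 0 * b ! k + bit_of (2*k+3) 0 * (1 - b ! k)) = (\<Sum>k<K. 1 - b ! k)"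
    proof (rule sum.cong)
      fix k
      have "bit_of (2*k+2) 0 = 0" by (simp add: bit_of_def)
      moreover have "bit_of (2*k+3) 0 = 1" by (simp add: bit_of_def)
      ultimately show "bit_of (2*k+2) 0 * b ! k + bit_of (2*k+3) 0 * (1 - b ! k) = 1 - b ! k" by simp
    qed simp
    also have "\<dots> = z b" unfolding z_def by (simp add: sum_list_sum_nth lb atLeast0LessThan)
    finally show ?thesis .
  qed
  have jS: "even (\<Sum>k<K. bit_of (2*k+2) (Suc q) * b ! k + bit_of (2*k+3) (Suc q) * (1 - b ! k))"
    if q: "Suc q < m" for q
  proof -
    have "(\<Sum>k<K. bit_of (2*k+2) (Suc q) * b ! k + bit_of (2*k+3) (Suc q) * (1 - b ! k)) = (\<Sum>k<K. bit_of (Suc k) q)"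
    proof (rule sum.cong)
      fix k assume "k \<in> {..<K}"
      then have "b ! k \<le> 1" using bin by simp
      moreover have "bit_of (2*k+2) (Suc q) = bit_of (Suc k) q" using bitSa[of "k+1" q] by (simp add: algebra_simps)
      moreover have "bit_of (2*k+3) (Suc q) = bit_of (Suc k) q" using bitSb[of "k+1" q] by (simp add: algebra_simps numeral_3_eq_3)
      ultimately show "bit_of (2*k+2) (Suc q) * b ! k + bit_of (2*k+3) (Suc q) * (1 - b ! k) = bit_of (Suc k) q"
        by (simp add: algebra_simps)
    qed simp
    also have "\<dots> = (\<Sum>k<2^(m-1). bit_of k q)"
    proof -
      have "2^(m-1) = Suc K" using K by simp
      then show ?thesis by (simp only: sum.lessThan_Suc_shift) (simp add: bit_of_def)
    qed
    also have "\<dots> = 2^(m-2)" using bitcount[of q "m-1"] q by simp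
    finally show ?thesis using m by simp
  qed
  show ?thesis
  proof
    assume "fw b \<in> hamming_code m"
    then have "even (\<Sum>i=1..2 ^ m - 1. bit_of i 0 * fw b ! (i - 1))" using m unfolding hamming_code_def by auto
    then show "even (z b)" using S j0 by simp
  next
    assume e: "even (z b)"
    have "\<forall>j<m. even (\<Sum>i=1..2 ^ m - 1. bit_of i j * fw b ! (i - 1))"
    proof (intro allI impI)
      fix j assume "j < m"
      then show "even (\<Sum>i=1..2 ^ m - 1. bit_of i j * fw b ! (i - 1))"
        unfolding S using e j0 jS by (cases j) auto
    qed
    then show "fw b \<in> hamming_code m" using fbw unfolding hamming_code_def by blast
  qed
qed


theorem mainTheorem12:
  fixes m :: nat
  assumes "m \<ge> 3"
  shows "N_count (hamming_code m) (S2 (2 ^ m - 1)) = 2 ^ ((2 ^ m - 1) div 2 - 1)"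
proof -
  define K where "K = 2^(m-1) - (1::nat)"
  have n: "2^m - 1 = 2*K+1"
  proof -
    have "(2::nat)^m = 2 * 2^(m-1)" using assms by (cases m) auto
    moreover have "2^(m-1) \<ge> (1::nat)" by simp
    ultimately show ?thesis unfolding K_def by linarith
  qed
  have K1: "K \<ge> 1"
  proof -
    have "(2::nat)^(m-1) \<ge> 2^2" using assms by (intro power_increasing) auto
    then show ?thesis unfolding K_def by simp
  qed
  have eq: "hamming_code m \<inter> S2 (2*K+1) = fw ` {b \<in> binary_words K. even (z b)}"
  proof safe
    fix x assume h: "x \<in> hamming_code m" "x \<in> S2 (2*K+1)"
    then have xb: "x \<in> binary_words (2*K+1)" unfolding S2_def by auto
    then obtain b where b: "b \<in> binary_words K" "x = fw b"
      using char_iff[of x K] S2_char[OF xb] h(2) by blast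
    then have "even (z b)" using ham_C[OF assms K_def b(1)] h(1) by simp
    then show "x \<in> fw ` {b \<in> binary_words K. even (z b)}" using b by blast
  next
    fix b assume b: "b \<in> binary_words K" "even (z b)"
    then show "fw b \<in> hamming_code m" using ham_C[OF assms K_def b(1)] by simp
    have "fw b \<in> binary_words (2*K+1) \<and> (\<forall>i<2*K+1. even i \<longrightarrow> fw b ! i = (if i = 0 then 0 else 1 - fw b ! (i - 1)))"
      using char_iff[of "fw b" K] b by blast
    then show "fw b \<in> S2 (2*K+1)" using S2_char[of "fw b" "2*K+1"] by blast
  qed
  have "(2^m - 1) div 2 = K" unfolding n by simp
  moreover have "card (fw ` {b \<in> binary_words K. even (z b)}) = 2^(K-1)"
  proof -
    have "card (fw ` {b \<in> binary_words K. even (z b)}) = card {b \<in> binary_words K. even (z b)}"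
      by (rule card_image) (rule inj_on_subset[OF fw_inj], simp)
    also have "\<dots> = 2^(K-1)" using count_even[of "K-1"] K1 by simp
    finally show ?thesis .
  qed
  ultimately show ?thesis unfolding N_count_def n eq by simp
qed

end
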